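(* Let $T_1=(Q_1,\Sigma,\Delta,R_1,q_1^0)$ and $T_2=(Q_2,\Delta,\Omega,R_2,q_2^0)$ be top-down tree transducers, let $A$ be the domain automaton of $T_2$, and let $\hat{T}_1$ be the product construction of $T_1$ and $A$. Then $\text{dom}(\hat{T}_1)=\text{dom}(T_1\circ T_2)$, and for every $s\in T_\Sigma$, $\hat{T}_1(s)=T_1(s)\cap\text{dom}(T_2)$.
   Context: A top-down tree transducer $T=(Q,\Sigma,\Delta,R,q_0)$ has finite state set $Q$, ranked input/output alphabets $\Sigma,\Delta$, initial state $q_0$, and finite rule set $R$ of rules $q(a(x_1,\dots,x_k))\to t$ with $a\in\Sigma_k$ ($\Sigma_k$ = symbols of rank $k$) and $t$ a tree over $\Delta$ whose leaves may additionally be of the form $q'(x_i)$, $q'\in Q$, $i\in[k]$; rules are used as rewrite rules in the usual way. $T(s)$ is the set of trees over $\Delta$ derivable from $q_0(s)$, $\text{dom}(T)=\{s\mid T(s)\neq\emptyset\}$; $\text{dom}(T_1\circ T_2)$ is the set of $s$ such that $T_2(t)\neq\emptyset$ for some $t\in T_1(s)$. For $q\in Q$, $a\in\Sigma_k$, $\text{rhs}_T(q,a)$ is the set of right-hand sides of rules with left-hand side $q(a(x_1,\dots,x_k))$; for a set $\Gamma$ of right-hand sides, $\Gamma[x_i]$ is the set of $q'\in Q$ with $q'(x_i)$ occurring in some tree of $\Gamma$. Domain automaton of $T$: the top-down tree automaton (transducer over $\Sigma$ with rules of the form $p(a(x_1,\dots,x_k))\to a(p_1(x_1),\dots,p_k(x_k))$)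 with states all subsets of $Q$, initial state $\{q_0\}$, rules $S(a(x_1,\dots,x_k))\to a(S_1(x_1),\dots,S_k(x_k))$ for every $a\in\Sigma_k$, nonempty $S=\{q_1,\dots,q_n\}\subseteq Q$ and nonempty $\Gamma_j\subseteq\text{rhs}_T(q_j,a)$ ($j\in[n]$), where $S_i=\bigcup_j\Gamma_j[x_i]$, and rules $\emptyset(a(x_1,\dots,x_k))\to a(\emptyset(x_1),\dots,\emptyset(x_k))$ for all $a$. Product construction of transducers $T=(Q,\Sigma,\Delta,R,q_0)$ and $T'=(Q',\Delta,\Omega,R',q'_0)$: the transducer with states $Q\times Q'$, input $\Sigma$, output $\Omega$, initial state $(q_0,q'_0)$, and, for every rule $q(a(x_1,\dots,x_k))\to\xi$ of $T$, every $p\in Q'$ and every tree $\zeta$ derivable from $p(\xi)$ using rules of $T'$ in which the leaves of $\xi$ of the form $q''(x_i)$ are treated as unrewritable symbols and a state $p'$ applied to such a leaf stays as $p'(q''(x_i))$, the rule $(q,p)(a(x_1,\dots,x_k))\to\zeta'$, where $\zeta'$ is obtained from $\zeta$ by replacing each $p'(q''(x_i))$ by $(q'',p')(x_i)$. *)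

theory Defs
  imports Main
begin

datatype 'a rtree = Nd 'a "'a rtree list"

(* A ranked alphabet is a set of pairs (symbol, rank); Sigma_k = {a. (a,k) \<in> Sigma}. *)
inductive_set trees :: "('a \<times> nat) set \<Rightarrow> 'a rtree set" for Sig where
  "(a, length ts) \<in> Sig \<Longrightarrow> (\<forall>t\<in>set ts. t \<in> trees Sig) \<Longrightarrow> Nd a ts \<in> trees Sig"

(* Right-hand sides: trees over the output alphabet whose leaves may be q(x_i), i \<ge> 1. *)
datatype ('b, 'q) rhs = RNode 'b "('b, 'q) rhs list" | RVar 'q nat

fun rvars :: "('b, 'q) rhs \<Rightarrow> ('q \<times> nat) set" where
  "rvars (RVar q i) = {(q, i)}"
| "rvars (RNode b ts) = (\<Union>t\<in>set ts. rvars t)"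

fun wf_rhs :: "('b \<times> nat) set \<Rightarrow> 'q set \<Rightarrow> nat \<Rightarrow> ('b, 'q) rhs \<Rightarrow> bool" where
  "wf_rhs D Q k (RVar q i) = (q \<in> Q \<and> 1 \<le> i \<and> i \<le> k)"
| "wf_rhs D Q k (RNode b ts) = ((b, length ts) \<in> D \<and> (\<forall>t\<in>set ts. wf_rhs D Q k t))"

(* A top-down tree transducer (Q, Sigma, Delta, R, q0).
   A rule (q, a, k, t) stands for q(a(x_1,...,x_k)) -> t. *)
record ('q, 'a, 'b) tdtt =
  states :: "'q set"
  inp    :: "('a \<times> nat) set"
  outp   :: "('b \<times> nat) set"
  rules  :: "('q \<times> 'a \<times> nat \<times> ('b, 'q) rhs) set"
  init   :: 'q

definition wf_tdtt :: "('q, 'a, 'b) tdtt \<Rightarrow> bool" where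
  "wf_tdtt T \<longleftrightarrow> finite (states T) \<and> finite (inp T) \<and> finite (outp T) \<and> finite (rules T)
     \<and> init T \<in> states T
     \<and> (\<forall>(q, a, k, t) \<in> rules T. q \<in> states T \<and> (a, k) \<in> inp T \<and> wf_rhs (outp T) (states T) k t)"

(* Semantics: run T q s u  means  q(s) =>* u  (u an output tree).
   inst T ss t u  means the right-hand side t, with x_i bound to ss!(i-1), rewrites to u,
   each occurrence q'(x_i) being rewritten independently. *)
inductive run :: "('q, 'a, 'b) tdtt \<Rightarrow> 'q \<Rightarrow> 'a rtree \<Rightarrow> 'b rtree \<Rightarrow> bool"
  and inst :: "('q, 'a, 'b) tdtt \<Rightarrow> 'a rtree list \<Rightarrow> ('b, 'q) rhs \<Rightarrow> 'b rtree \<Rightarrow> bool"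
  for T where
  run_rule: "(q, a, length ss, t) \<in> rules T \<Longrightarrow> inst T ss t u \<Longrightarrow> run T q (Nd a ss) u"
| inst_var: "1 \<le> i \<Longrightarrow> i \<le> length ss \<Longrightarrow> run T q (ss ! (i - 1)) u \<Longrightarrow> inst T ss (RVar q i) u"
| inst_node: "list_all2 (inst T ss) ts us \<Longrightarrow> inst T ss (RNode b ts) (Nd b us)"

definition transl :: "('q, 'a, 'b) tdtt \<Rightarrow> 'a rtree \<Rightarrow> 'b rtree set" where
  "transl T s = {u. run T (init T) s u}"

definition tdom :: "('q, 'a, 'b) tdtt \<Rightarrow> 'a rtree set" where
  "tdom T = {s \<in> trees (inp T). transl T s \<noteq> {}}"

definition tdom_comp :: "('q1, 'a, 'b) tdtt \<Rightarrow> ('q2, 'b, 'c) tdtt \<Rightarrow> 'a rtree set" where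
  "tdom_comp T1 T2 = {s \<in> trees (inp T1). \<exists>t \<in> transl T1 s. transl T2 t \<noteq> {}}"

definition rhs_of :: "('q, 'a, 'b) tdtt \<Rightarrow> 'q \<Rightarrow> 'a \<Rightarrow> nat \<Rightarrow> ('b, 'q) rhs set" where
  "rhs_of T q a k = {t. (q, a, k, t) \<in> rules T}"

definition rhs_states_at :: "('b, 'q) rhs set \<Rightarrow> nat \<Rightarrow> 'q set" where
  "rhs_states_at Gam i = {q'. \<exists>t\<in>Gam. (q', i) \<in> rvars t}"

definition aut_rhs :: "'a \<Rightarrow> nat \<Rightarrow> (nat \<Rightarrow> 'p) \<Rightarrow> ('a, 'p) rhs" where
  "aut_rhs a k P = RNode a (map (\<lambda>i. RVar (P i) i) [1..<Suc k])"

definition domain_automaton :: "('q, 'a, 'b) tdtt \<Rightarrow> ('q set, 'a, 'a) tdtt" where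
  "domain_automaton T =
    \<lparr> states = Pow (states T), inp = inp T, outp = inp T,
      rules =
        {(S, a, k, aut_rhs a k P) | S a k P.
            (a, k) \<in> inp T \<and> S \<noteq> {} \<and> S \<subseteq> states T \<and>
            (\<exists>Gam :: 'q \<Rightarrow> ('b, 'q) rhs set.
               (\<forall>q\<in>S. Gam q \<noteq> {} \<and> Gam q \<subseteq> rhs_of T q a k) \<and>
               (\<forall>i. P i = (\<Union>q\<in>S. rhs_states_at (Gam q) i)))}
        \<union> {({}, a, k, aut_rhs a k (\<lambda>_. {})) | a k. (a, k) \<in> inp T},
      init = {init T} \<rparr>"

(* Product construction.  pder T' p xi zeta: zeta' is derivable from p(xi) by rules of T',
   leaves q''(x_i) of xi being unrewritable, with p'(q''(x_i)) already replaced by (q'',p')(x_i).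
   pinst T' xis t zeta: instantiating rhs t of T' with y_j := xis!(j-1) and deriving. *)
inductive pder :: "('p, 'b, 'c) tdtt \<Rightarrow> 'p \<Rightarrow> ('b, 'q) rhs \<Rightarrow> ('c, 'q \<times> 'p) rhs \<Rightarrow> bool"
  and pinst :: "('p, 'b, 'c) tdtt \<Rightarrow> ('b, 'q) rhs list \<Rightarrow> ('c, 'p) rhs \<Rightarrow> ('c, 'q \<times> 'p) rhs \<Rightarrow> bool"
  for T' where
  pder_var: "pder T' p (RVar q i) (RVar (q, p) i)"
| pder_rule: "(p, b, length xis, t) \<in> rules T' \<Longrightarrow> pinst T' xis t z \<Longrightarrow> pder T' p (RNode b xis) z"
| pinst_var: "1 \<le> j \<Longrightarrow> j \<le> length xis \<Longrightarrow> pder T' p (xis ! (j - 1)) z \<Longrightarrow> pinst T' xis (RVar p j) z"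
| pinst_node: "list_all2 (pinst T' xis) ts zs \<Longrightarrow> pinst T' xis (RNode c ts) (RNode c zs)"

definition product :: "('q, 'a, 'b) tdtt \<Rightarrow> ('p, 'b, 'c) tdtt \<Rightarrow> ('q \<times> 'p, 'a, 'c) tdtt" where
  "product T T' =
    \<lparr> states = states T \<times> states T', inp = inp T, outp = outp T',
      rules = {((q, p), a, k, z) | q p a k xi z.
                 (q, a, k, xi) \<in> rules T \<and> p \<in> states T' \<and> pder T' p xi z},
      init = (init T, init T') \<rparr>"

end

theory Submission
  imports Defs
begin

lemma list_all2_exI:
  assumes "\<forall>x\<in>set xs. \<exists>y. R x y"
  shows "\<exists>ys. list_all2 R xs ys"
  using assms
proof (induction xs)
  case Nil then show ?case by auto
next
  case (Cons x xs)
  then obtain y ys where "R x y" "list_all2 R xs ys" by auto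
  then show ?case by (intro exI[of _ "y#ys"]) auto
qed

lemma rvars_aut_rhs: "rvars (aut_rhs a k P) = {(P i, i) | i. 1 \<le> i \<and> i \<le> k}"
  by (auto simp: aut_rhs_def)

lemma wf_rhs_rvars: "wf_rhs D Q k t \<Longrightarrow> (q, i) \<in> rvars t \<Longrightarrow> q \<in> Q \<and> 1 \<le> i \<and> i \<le> k"
  by (induction t) auto

lemma inst_rvars:
  "inst T ss xi u \<Longrightarrow> (q, i) \<in> rvars xi \<Longrightarrow> 1 \<le> i \<and> i \<le> length ss \<and> (\<exists>u'. run T q (ss ! (i - 1)) u')"
proof (induction rule: run_inst.inducts(2)[where ?P1.0="\<lambda>_ _ _. True"])
  case (inst_node ss ts us b)
  then obtain t where "t \<in> set ts" "(q, i) \<in> rvars t" by auto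
  then obtain j where "j < length ts" "t = ts ! j" by (auto simp: in_set_conv_nth)
  then show ?case using inst_node(1) \<open>(q, i) \<in> rvars t\<close> by (auto simp: list_all2_conv_all_nth)
qed auto

lemma inst_exI:
  "(\<forall>(q,i)\<in>rvars xi. 1 \<le> i \<and> i \<le> length ss \<and> (\<exists>u. run T q (ss ! (i - 1)) u)) \<Longrightarrow> \<exists>u. inst T ss xi u"
proof (induction xi)
  case (RNode b ts)
  then have "\<forall>t\<in>set ts. \<exists>u. inst T ss t u" by fastforce
  then obtain us where "list_all2 (inst T ss) ts us" using list_all2_exI by blast
  then show ?case by (blast intro: inst_node)
next
  case (RVar q i)
  then obtain u where "run T q (ss!(i-1)) u" "1 \<le> i" "i \<le> length ss" by auto
  then show ?case by (blast intro: inst_var)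
qed

lemma run_trees:
  assumes wf: "wf_tdtt T"
  shows "run T q s u \<Longrightarrow> u \<in> trees (outp T)"
    and "inst T ss xi u \<Longrightarrow> wf_rhs (outp T) (states T) (length ss) xi \<Longrightarrow> u \<in> trees (outp T)"
proof (induction q s u and ss xi u rule: run_inst.inducts)
  case (run_rule q a ss t u)
  then show ?case using wf unfolding wf_tdtt_def by fastforce
next
  case (inst_var i ss q u)
  then show ?case by simp
next
  case (inst_node ss ts us b)
  have "(b, length us) \<in> outp T" using inst_node by (auto dest: list_all2_lengthD)
  moreover have "\<forall>t\<in>set us. t \<in> trees (outp T)"
    using inst_node by (fastforce simp: list_all2_conv_all_nth in_set_conv_nth)
  ultimately show ?case by (auto intro: trees.intros)
qed

lemma wf_rule: "wf_tdtt T \<Longrightarrow> (q,a,k,t) \<in> rules T \<Longrightarrow> q \<in> states T \<and> (a,k) \<in> inp T \<and> wf_rhs (outp T) (states T) k t"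
  unfolding wf_tdtt_def by fastforce

lemma da_simps[simp]:
  "states (domain_automaton T) = Pow (states T)"
  "inp (domain_automaton T) = inp T"
  "init (domain_automaton T) = {init T}"
  by (simp_all add: domain_automaton_def)

lemma da_rulesD:
  assumes "(S, a, k, t) \<in> rules (domain_automaton T)"
  shows "(a, k) \<in> inp T \<and> S \<subseteq> states T \<and>
     (\<exists>P. t = aut_rhs a k P \<and>
        (S = {} \<longrightarrow> P = (\<lambda>_. {})) \<and>
        (S \<noteq> {} \<longrightarrow> (\<exists>Gam. (\<forall>q\<in>S. Gam q \<noteq> {} \<and> Gam q \<subseteq> rhs_of T q a k) \<and> (\<forall>i. P i = (\<Union>q\<in>S. rhs_states_at (Gam q) i)))))"
  using assms unfolding domain_automaton_def by auto

lemma da_sound: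
  assumes wf: "wf_tdtt T"
  shows "run (domain_automaton T) S t u \<Longrightarrow> t \<in> trees (inp T) \<and> S \<subseteq> states T \<and> (\<forall>q\<in>S. \<exists>v. run T q t v)"
proof (induction t arbitrary: S u)
  case (Nd a ss)
  let ?A = "domain_automaton T"
  let ?k = "length ss"
  from Nd.prems obtain r u' where r: "(S, a, ?k, r) \<in> rules ?A" and ir: "inst ?A ss r u'"
    by (auto elim: run.cases)
  from da_rulesD[OF r] obtain P where ak: "(a, ?k) \<in> inp T" and Ss: "S \<subseteq> states T"
    and rP: "r = aut_rhs a ?k P"
    and Pe: "S = {} \<longrightarrow> P = (\<lambda>_. {})"
    and PG: "S \<noteq> {} \<longrightarrow> (\<exists>Gam. (\<forall>q\<in>S. Gam q \<noteq> {} \<and> Gam q \<subseteq> rhs_of T q a ?k) \<and> (\<forall>i. P i = (\<Union>q\<in>S. rhs_states_at (Gam q) i)))"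
    by blast
  have sub: "ss ! (i - 1) \<in> trees (inp T) \<and> P i \<subseteq> states T \<and> (\<forall>q\<in>P i. \<exists>v. run T q (ss ! (i - 1)) v)"
    if "1 \<le> i" "i \<le> ?k" for i
  proof -
    have "(P i, i) \<in> rvars r" using that rP by (auto simp: rvars_aut_rhs)
    from inst_rvars[OF ir this] obtain w where "run ?A (P i) (ss ! (i - 1)) w" by blast
    moreover have "ss ! (i - 1) \<in> set ss" using that by auto
    ultimately show ?thesis using Nd.IH by blast
  qed
  have tr: "Nd a ss \<in> trees (inp T)"
  proof (rule trees.intros[OF ak], intro ballI)
    fix x assume "x \<in> set ss"
    then obtain j where "j < ?k" "x = ss ! j" by (auto simp: in_set_conv_nth)
    then show "x \<in> trees (inp T)" using sub[of "Suc j"] by auto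
  qed
  have "\<exists>v. run T q (Nd a ss) v" if q: "q \<in> S" for q
  proof -
    from PG q obtain Gam where G: "\<forall>q\<in>S. Gam q \<noteq> {} \<and> Gam q \<subseteq> rhs_of T q a ?k"
      and PGam: "\<forall>i. P i = (\<Union>q\<in>S. rhs_states_at (Gam q) i)" by blast
    from G q obtain g where g: "g \<in> Gam q" "(q, a, ?k, g) \<in> rules T" by (auto simp: rhs_of_def)
    have wfg: "wf_rhs (outp T) (states T) ?k g" using g(2) wf unfolding wf_tdtt_def by fastforce
    have "\<exists>v. inst T ss g v"
    proof (rule inst_exI, safe)
      fix q' i assume qi: "(q', i) \<in> rvars g"
      from wf_rhs_rvars[OF wfg qi] have i: "1 \<le> i" "i \<le> ?k" by auto
      then show "1 \<le> i" "i \<le> ?k" by auto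
      have "q' \<in> P i" using PGam q g(1) qi by (auto simp: rhs_states_at_def)
      then show "\<exists>v. run T q' (ss ! (i - 1)) v" using sub[OF i] by blast
    qed
    then show ?thesis using g(2) by (blast intro: run_rule)
  qed
  then show ?case using tr Ss by blast
qed

lemma da_complete:
  fixes T :: "('q, 'a, 'b) tdtt"
  assumes wf: "wf_tdtt T"
  shows "t \<in> trees (inp T) \<Longrightarrow> S \<subseteq> states T \<Longrightarrow> (\<forall>q\<in>S. \<exists>v. run T q t v) \<Longrightarrow> \<exists>u. run (domain_automaton T) S t u"
proof (induction t arbitrary: S rule: trees.induct)
  case (1 a ts)
  let ?A = "domain_automaton T"
  let ?k = "length ts"
  show ?case
  proof (cases "S = {}")
    case True
    have r: "({}, a, ?k, aut_rhs a ?k (\<lambda>_. {} :: 'q set)) \<in> rules ?A"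
      using 1 unfolding domain_automaton_def by auto
    have "\<exists>u. inst ?A ts (aut_rhs a ?k (\<lambda>_. {} :: 'q set)) u"
    proof (rule inst_exI, safe)
      fix p i assume "(p, i) \<in> rvars (aut_rhs a ?k (\<lambda>_. {} :: 'q set))"
      then have i: "1 \<le> i" "i \<le> ?k" and p: "p = {}" by (auto simp: rvars_aut_rhs)
      then show "1 \<le> i" "i \<le> ?k" by auto
      have "ts ! (i - 1) \<in> set ts" using i by auto
      then show "\<exists>u. run ?A p (ts ! (i - 1)) u" using 1(2) p by blast
    qed
    then show ?thesis using r True by (blast intro: run_rule)
  next
    case False
    have "\<forall>q\<in>S. \<exists>g. (q, a, ?k, g) \<in> rules T \<and> (\<exists>v. inst T ts g v)"
    proof
      fix q assume "q \<in> S"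
      with 1(4) obtain v where "run T q (Nd a ts) v" by blast
      then show "\<exists>g. (q, a, ?k, g) \<in> rules T \<and> (\<exists>v. inst T ts g v)"
        by (cases rule: run.cases) auto
    qed
    then obtain gf where gf: "\<forall>q\<in>S. (q, a, ?k, gf q) \<in> rules T \<and> (\<exists>v. inst T ts (gf q) v)"
      by metis
    define Gam where "Gam = (\<lambda>q. {gf q})"
    define P where "P = (\<lambda>i. \<Union>q\<in>S. rhs_states_at (Gam q) i)"
    have G: "\<forall>q\<in>S. Gam q \<noteq> {} \<and> Gam q \<subseteq> rhs_of T q a ?k"
      using gf by (auto simp: Gam_def rhs_of_def)
    have r: "(S, a, ?k, aut_rhs a ?k P) \<in> rules ?A"
    proof -
      have "(a, ?k) \<in> inp T \<and> S \<noteq> {} \<and> S \<subseteq> states T \<and>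
            (\<exists>Gam. (\<forall>q\<in>S. Gam q \<noteq> {} \<and> Gam q \<subseteq> rhs_of T q a ?k) \<and>
               (\<forall>i. P i = (\<Union>q\<in>S. rhs_states_at (Gam q) i)))"
        using 1(1,3) False G unfolding P_def by (intro conjI exI[of _ Gam]) simp_all
      then show ?thesis unfolding domain_automaton_def tdtt.simps
        apply (intro UnI1 CollectI exI[of _ S] exI[of _ a] exI[of _ ?k] exI[of _ P])
        apply (rule conjI[OF refl])
        apply assumption
        done
    qed
    have "\<exists>u. inst ?A ts (aut_rhs a ?k P) u"
    proof (rule inst_exI, safe)
      fix p i assume "(p, i) \<in> rvars (aut_rhs a ?k P)"
      then have i: "1 \<le> i" "i \<le> ?k" and p: "p = P i" by (auto simp: rvars_aut_rhs)
      then show "1 \<le> i" "i \<le> ?k" by auto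
      have mem: "ts ! (i - 1) \<in> set ts" using i by auto
      have "P i \<subseteq> states T"
      proof
        fix q' assume "q' \<in> P i"
        then obtain q where q: "q \<in> S" "(q', i) \<in> rvars (gf q)"
          unfolding P_def Gam_def rhs_states_at_def by blast
        have "(q, a, ?k, gf q) \<in> rules T" using gf q(1) by blast
        then have "wf_rhs (outp T) (states T) ?k (gf q)" using wf_rule[OF wf] by blast
        from wf_rhs_rvars[OF this q(2)] show "q' \<in> states T" by simp
      qed
      moreover have "\<forall>q'\<in>P i. \<exists>v. run T q' (ts ! (i - 1)) v"
      proof
        fix q' assume "q' \<in> P i"
        then obtain q where q: "q \<in> S" "(q', i) \<in> rvars (gf q)"
          unfolding P_def Gam_def rhs_states_at_def by blast
        from gf q(1) obtain v where "inst T ts (gf q) v" by blast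
        from inst_rvars[OF this q(2)] show "\<exists>v. run T q' (ts ! (i - 1)) v" by blast
      qed
      ultimately show "\<exists>u. run ?A p (ts ! (i - 1)) u" using 1(2) p mem by blast
    qed
    then show ?thesis using r by (blast intro: run_rule)
  qed
qed


lemma product_simps[simp]:
  "states (product T T') = states T \<times> states T'"
  "inp (product T T') = inp T"
  "init (product T T') = (init T, init T')"
  by (simp_all add: product_def)

lemma product_rules:
  "((q, p), a, k, z) \<in> rules (product T T') \<longleftrightarrow> (\<exists>xi. (q, a, k, xi) \<in> rules T \<and> p \<in> states T' \<and> pder T' p xi z)"
  by (auto simp: product_def)

lemma pinst_varD: "pinst T' xis (RVar p j) z \<Longrightarrow> 1 \<le> j \<and> j \<le> length xis \<and> pder T' p (xis ! (j - 1)) z"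
  by (erule pinst.cases) auto

lemma pinst_autD:
  assumes "pinst T' xis (aut_rhs b k P) z"
  shows "\<exists>zs. z = RNode b zs \<and> length zs = k \<and> (\<forall>j<k. pder T' (P (Suc j)) (xis ! j) (zs ! j))"
proof -
  obtain zs where z: "z = RNode b zs"
    and l: "list_all2 (pinst T' xis) (map (\<lambda>i. RVar (P i) i) [1..<Suc k]) zs"
    using assms unfolding aut_rhs_def by (auto elim: pinst.cases)
  have "length zs = k" using l by (auto dest: list_all2_lengthD simp del: upt_Suc)
  moreover have "pder T' (P (Suc j)) (xis ! j) (zs ! j)" if "j < k" for j
  proof -
    have "pinst T' xis (RVar (P (Suc j)) (Suc j)) (zs ! j)"
      using l that by (auto simp: list_all2_conv_all_nth nth_upt simp del: upt_Suc)
    from pinst_varD[OF this] show ?thesis by simp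
  qed
  ultimately show ?thesis using z by blast
qed

lemma pinst_autI:
  assumes "length xis = k" "length zs = k" "\<forall>j<k. pder T' (P (Suc j)) (xis ! j) (zs ! j)"
  shows "pinst T' xis (aut_rhs b k P) (RNode b zs)"
  unfolding aut_rhs_def
proof (rule pinst_node)
  show "list_all2 (pinst T' xis) (map (\<lambda>i. RVar (P i) i) [1..<Suc k]) zs"
    unfolding list_all2_conv_all_nth
  proof (intro conjI allI impI)
    show "length (map (\<lambda>i. RVar (P i) i) [1..<Suc k]) = length zs" using assms by (simp del: upt_Suc)
    fix j assume "j < length (map (\<lambda>i. RVar (P i) i) [1..<Suc k])"
    then have j: "j < k" by (simp del: upt_Suc)
    have "pinst T' xis (RVar (P (Suc j)) (Suc j)) (zs ! j)"
      using j assms by (intro pinst_var) auto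
    then show "pinst T' xis (map (\<lambda>i. RVar (P i) i) [1..<Suc k] ! j) (zs ! j)"
      using j by (simp add: nth_upt del: upt_Suc)
  qed
qed

lemma aut_run_sub:
  assumes "inst T' us (aut_rhs b k P) u'" "j < k"
  shows "\<exists>w. run T' (P (Suc j)) (us ! j) w"
proof -
  have "(P (Suc j), Suc j) \<in> rvars (aut_rhs b k P)" using assms(2) by (auto simp: rvars_aut_rhs)
  from inst_rvars[OF assms(1) this] show ?thesis by simp
qed

lemma aut_run_intro:
  assumes "(p, b, length us, aut_rhs b (length us) P) \<in> rules T'"
    and "\<forall>j<length us. \<exists>w. run T' (P (Suc j)) (us ! j) w"
  shows "\<exists>u'. run T' p (Nd b us) u'"
proof -
  have "\<exists>u'. inst T' us (aut_rhs b (length us) P) u'"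
  proof (rule inst_exI, safe)
    fix p' i assume "(p', i) \<in> rvars (aut_rhs b (length us) P)"
    then have i: "1 \<le> i" "i \<le> length us" and p: "p' = P i" by (auto simp: rvars_aut_rhs)
    then show "1 \<le> i" "i \<le> length us" by auto
    have "i - 1 < length us" "Suc (i - 1) = i" using i by auto
    then show "\<exists>u. run T' p' (us ! (i - 1)) u" using assms(2) p by metis
  qed
  then show ?thesis using assms(1) by (blast intro: run_rule)
qed

lemma prod_sound:
  assumes H: "\<And>p b k t. (p, b, k, t) \<in> rules T' \<Longrightarrow> p \<in> states T' \<and> (\<exists>P. t = aut_rhs b k P)"
  shows "run (product T T') qS s u \<Longrightarrow> run T (fst qS) s u \<and> (\<exists>u'. run T' (snd qS) u u')"
    and "inst (product T T') ss z u \<Longrightarrow> (\<forall>p xi. pder T' p xi z \<longrightarrow> inst T ss xi u \<and> (\<exists>u'. run T' p u u'))"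
proof (induction qS s u and ss z u rule: run_inst.inducts)
  case (run_rule qS a ss t u)
  obtain q p where qS: "qS = (q, p)" by (cases qS)
  from run_rule(1) obtain xi where "(q, a, length ss, xi) \<in> rules T" "pder T' p xi t"
    unfolding qS product_rules by blast
  with run_rule(3) show ?case unfolding qS by (auto intro: run_inst.intros(1))
next
  case (inst_var i ss qp u)
  show ?case
  proof (intro allI impI)
    fix p xi assume "pder T' p xi (RVar qp i)"
    then show "inst T ss xi u \<and> (\<exists>u'. run T' p u u')"
    proof (cases rule: pder.cases)
      case (pder_var q)
      then show ?thesis using inst_var by (auto intro: run_inst.intros(2))
    next
      case (pder_rule b xis t)
      from H[OF pder_rule(2)] obtain P where "t = aut_rhs b (length xis) P" by blast
      from pinst_autD[OF pder_rule(3)[unfolded this]] show ?thesis by auto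
    qed
  qed
next
  case (inst_node ss zs us b)
  show ?case
  proof (intro allI impI)
    fix p xi assume "pder T' p xi (RNode b zs)"
    then show "inst T ss xi (Nd b us) \<and> (\<exists>u'. run T' p (Nd b us) u')"
    proof (cases rule: pder.cases)
      case (pder_rule c xis t)
      from H[OF pder_rule(2)] obtain P where tP: "t = aut_rhs c (length xis) P" by blast
      from pinst_autD[OF pder_rule(3)[unfolded tP]] have cb: "c = b" and lz: "length zs = length xis"
        and pd: "\<forall>j<length xis. pder T' (P (Suc j)) (xis ! j) (zs ! j)" by auto
      have lu: "length us = length zs" using inst_node by (auto dest: list_all2_lengthD)
      have IH: "inst T ss (xis ! j) (us ! j) \<and> (\<exists>u'. run T' (P (Suc j)) (us ! j) u')"
        if "j < length xis" for j
        using inst_node that pd lz by (auto simp: list_all2_conv_all_nth)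
      have "inst T ss (RNode b xis) (Nd b us)"
        using IH lu lz by (intro run_inst.intros(3)) (auto simp: list_all2_conv_all_nth)
      moreover have "\<exists>u'. run T' p (Nd b us) u'"
        using aut_run_intro[of p b us P T'] pder_rule(2) tP cb IH lu lz by auto
      ultimately show ?thesis using pder_rule cb by simp
    qed
  qed
qed

lemma prod_complete:
  assumes H: "\<And>p b k t. (p, b, k, t) \<in> rules T' \<Longrightarrow> p \<in> states T' \<and> (\<exists>P. t = aut_rhs b k P)"
  shows "run T q s u \<Longrightarrow> (\<forall>S. (\<exists>u'. run T' S u u') \<longrightarrow> run (product T T') (q, S) s u)"
    and "inst T ss xi u \<Longrightarrow> (\<forall>p. (\<exists>u'. run T' p u u') \<longrightarrow> (\<exists>z. pder T' p xi z \<and> inst (product T T') ss z u))"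
proof (induction q s u and ss xi u rule: run_inst.inducts)
  case (run_rule q a ss t u)
  show ?case
  proof (intro allI impI)
    fix S assume a: "\<exists>u'. run T' S u u'"
    then have "S \<in> states T'" using H by (auto elim: run.cases)
    moreover from run_rule(3) a obtain z where "pder T' S t z" "inst (product T T') ss z u" by blast
    ultimately show "run (product T T') (q, S) (Nd a ss) u"
      using run_rule(1) by (auto intro!: run_inst.intros(1) simp: product_rules)
  qed
next
  case (inst_var i ss q u)
  show ?case
  proof (intro allI impI)
    fix p assume "\<exists>u'. run T' p u u'"
    then have "run (product T T') (q, p) (ss ! (i - 1)) u" using inst_var by blast
    then have "inst (product T T') ss (RVar (q, p) i) u" using inst_var by (blast intro: run_inst.intros(2))
    then show "\<exists>z. pder T' p (RVar q i) z \<and> inst (product T T') ss z u" by (blast intro: pder_var)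
  qed
next
  case (inst_node ss ts us b)
  show ?case
  proof (intro allI impI)
    fix p assume "\<exists>u'. run T' p (Nd b us) u'"
    then obtain r u' where r: "(p, b, length us, r) \<in> rules T'" and ir: "inst T' us r u'"
      by (auto elim: run.cases)
    from H[OF r] obtain P where rP: "r = aut_rhs b (length us) P" by blast
    have lt: "length ts = length us" using inst_node by (auto dest: list_all2_lengthD)
    have "\<forall>j<length us. \<exists>z. pder T' (P (Suc j)) (ts ! j) z \<and> inst (product T T') ss z (us ! j)"
    proof (intro allI impI)
      fix j assume j: "j < length us"
      from aut_run_sub[OF ir[unfolded rP] j] obtain w where "run T' (P (Suc j)) (us ! j) w" by blast
      then show "\<exists>z. pder T' (P (Suc j)) (ts ! j) z \<and> inst (product T T') ss z (us ! j)"
        using inst_node j lt by (auto simp: list_all2_conv_all_nth)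
    qed
    then obtain f where f: "\<forall>j<length us. pder T' (P (Suc j)) (ts ! j) (f j) \<and> inst (product T T') ss (f j) (us ! j)"
      by metis
    define zs where "zs = map f [0..<length us]"
    have "pinst T' ts (aut_rhs b (length us) P) (RNode b zs)"
      by (rule pinst_autI) (use f lt in \<open>auto simp: zs_def\<close>)
    then have "pder T' p (RNode b ts) (RNode b zs)"
      using r rP lt by (auto intro: pder_rule)
    moreover have "inst (product T T') ss (RNode b zs) (Nd b us)"
      using f by (intro run_inst.intros(3)) (auto simp: list_all2_conv_all_nth zs_def)
    ultimately show "\<exists>z. pder T' p (RNode b ts) z \<and> inst (product T T') ss z (Nd b us)" by blast
  qed
qed


lemma da_H:
  "(p, b, k, t) \<in> rules (domain_automaton T) \<Longrightarrow> p \<in> states (domain_automaton T) \<and> (\<exists>P. t = aut_rhs b k P)"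
  using da_rulesD[of p b k t T] by auto

theorem lemma14:
  fixes T1 :: "('q1, 'a, 'b) tdtt" and T2 :: "('q2, 'b, 'c) tdtt"
  assumes "wf_tdtt T1" and "wf_tdtt T2" and "inp T2 = outp T1"
  shows "tdom (product T1 (domain_automaton T2)) = tdom_comp T1 T2
       \<and> (\<forall>s \<in> trees (inp T1).
            transl (product T1 (domain_automaton T2)) s = transl T1 s \<inter> tdom T2)"
proof -
  let ?A = "domain_automaton T2"
  let ?P = "product T1 ?A"
  have i2: "init T2 \<in> states T2" using assms(2) unfolding wf_tdtt_def by blast
  have key: "transl ?P s = transl T1 s \<inter> tdom T2" for s
  proof (intro set_eqI iffI)
    fix u assume "u \<in> transl ?P s"
    then have "run ?P (init T1, {init T2}) s u" by (simp add: transl_def)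
    from prod_sound(1)[OF da_H this] obtain u' where r1: "run T1 (init T1) s u"
      and "run ?A {init T2} u u'" by auto
    from da_sound[OF assms(2) this(2)] have "u \<in> trees (inp T2)" "\<exists>v. run T2 (init T2) u v" by auto
    then show "u \<in> transl T1 s \<inter> tdom T2" using r1 by (auto simp: transl_def tdom_def)
  next
    fix u assume "u \<in> transl T1 s \<inter> tdom T2"
    then have r1: "run T1 (init T1) s u" and tr: "u \<in> trees (inp T2)" and v: "\<exists>v. run T2 (init T2) u v"
      by (auto simp: transl_def tdom_def)
    have "\<exists>u'. run ?A {init T2} u u'" using da_complete[OF assms(2) tr] i2 v by auto
    with prod_complete(1)[OF da_H r1] have "run ?P (init T1, {init T2}) s u" by blast
    then show "u \<in> transl ?P s" by (simp add: transl_def)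
  qed
  have "tdom ?P = tdom_comp T1 T2"
  proof -
    have "transl ?P s \<noteq> {} \<longleftrightarrow> (\<exists>t\<in>transl T1 s. transl T2 t \<noteq> {})" for s
    proof -
      have "t \<in> trees (inp T2)" if "t \<in> transl T1 s" for t
        using run_trees(1)[OF assms(1)] that assms(3) by (auto simp: transl_def)
      then show ?thesis unfolding key by (auto simp: tdom_def)
    qed
    then show ?thesis by (auto simp: tdom_def tdom_comp_def)
  qed
  with key show ?thesis by blast
qed

end
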